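(* Let $S$ be an $\mathcal{SOS}_q(n)$ with the property that, for any $n$-tuple $\mathbf{s}$, at most one of $\mathbf{s}$ and $-\mathbf{s}$ occurs in $S$ (as some $\mathbf{s}_n(i)$). Then $S$ and $-S=(-s_i)$ are s-disjoint.
   Context: For a periodic sequence $S=(s_i)$ over $\mathbb{Z}_q$ write $\mathbf{s}_n(i)=(s_i,\ldots,s_{i+n-1})$; for an $n$-tuple $\mathbf{u}=(u_0,\ldots,u_{n-1})$, $\mathbf{u}^R=(u_{n-1},\ldots,u_0)$ and $-\mathbf{u}=(-u_0,\ldots,-u_{n-1})$. A $q$-ary $n$-window sequence of period $m$ is a periodic sequence with $\mathbf{s}_n(i)=\mathbf{s}_n(j)\Rightarrow i\equiv j\pmod m$. An $\mathcal{SOS}_q(n)$ (special orientable sequence) is an $n$-window sequence with $\mathbf{s}_n(i)\neq\mathbf{s}_n(j)^R$ and $\mathbf{s}_n(i)\neq-\mathbf{s}_n(j)^R$ for all $i,j$. Two $n$-window sequences $S=(s_i)$, $T=(t_i)$ are s-disjoint if for all $i,j$: $\mathbf{s}_n(i)\neq\mathbf{t}_n(j)$, $\mathbf{s}_n(i)\neq\mathbf{t}_n(j)^R$, and $\mathbf{s}_n(i)\neq-\mathbf{t}_n(j)^R$. *)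

theory Defs
  imports Main
begin

text \<open>A periodic sequence over Z_q is modelled as s :: nat => int with values in {0..<q}
  and period m > 0. Tuples are lists; negation is taken modulo q.\<close>

definition win :: "(nat \<Rightarrow> int) \<Rightarrow> nat \<Rightarrow> nat \<Rightarrow> int list" where
  "win s n i = map (\<lambda>k. s (i + k)) [0..<n]"

definition negq :: "int \<Rightarrow> int list \<Rightarrow> int list" where
  "negq q u = map (\<lambda>x. (- x) mod q) u"

definition periodic_seq :: "int \<Rightarrow> nat \<Rightarrow> (nat \<Rightarrow> int) \<Rightarrow> bool" where
  "periodic_seq q m s \<longleftrightarrow> 0 < m \<and> (\<forall>i. s (i + m) = s i) \<and> (\<forall>i. 0 \<le> s i \<and> s i < q)"

definition window_seq :: "int \<Rightarrow> nat \<Rightarrow> nat \<Rightarrow> (nat \<Rightarrow> int) \<Rightarrow> bool" where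
  "window_seq q n m s \<longleftrightarrow> periodic_seq q m s \<and>
     (\<forall>i j. win s n i = win s n j \<longrightarrow> i mod m = j mod m)"

definition SOS :: "int \<Rightarrow> nat \<Rightarrow> nat \<Rightarrow> (nat \<Rightarrow> int) \<Rightarrow> bool" where
  "SOS q n m s \<longleftrightarrow> window_seq q n m s \<and>
     (\<forall>i j. win s n i \<noteq> rev (win s n j) \<and> win s n i \<noteq> negq q (rev (win s n j)))"

definition s_disjoint :: "int \<Rightarrow> nat \<Rightarrow> (nat \<Rightarrow> int) \<Rightarrow> (nat \<Rightarrow> int) \<Rightarrow> bool" where
  "s_disjoint q n s t \<longleftrightarrow> (\<forall>i j. win s n i \<noteq> win t n j \<and> win s n i \<noteq> rev (win t n j)
     \<and> win s n i \<noteq> negq q (rev (win t n j)))"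

end

theory Submission
  imports Defs
begin

lemma negneg: assumes "0 \<le> (x::int)" "x < q" shows "(- ((- x) mod q)) mod q = x"
proof -
  have "(- ((- x) mod q)) mod q = (- (- x)) mod q" by (simp add: mod_minus_eq)
  then show ?thesis using assms by simp
qed

lemma win_neg: "win (\<lambda>i. (- s i) mod q) n j = negq q (win s n j)"
  by (simp add: win_def negq_def)

lemma negq_negq: "\<forall>x\<in>set u. 0 \<le> x \<and> x < q \<Longrightarrow> negq q (negq q u) = u"
  by (induct u) (auto simp: negq_def negneg)

lemma win_range: "\<forall>i. 0 \<le> s i \<and> s i < q \<Longrightarrow> \<forall>x\<in>set (win s n j). 0 \<le> x \<and> x < q"
  by (auto simp: win_def)

lemma rev_negq: "rev (negq q u) = negq q (rev u)"
  by (simp add: negq_def rev_map)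

theorem theorem3p5:
  fixes q :: int and n m :: nat and s :: "nat \<Rightarrow> int"
  assumes "q \<ge> 2" and "n \<ge> 1"
    and "SOS q n m s"
    and "\<forall>u. \<not> ((\<exists>i. win s n i = u) \<and> (\<exists>j. win s n j = negq q u))"
  shows "window_seq q n m (\<lambda>i. (- s i) mod q) \<and> s_disjoint q n s (\<lambda>i. (- s i) mod q)"
proof -
  have per: "periodic_seq q m s" and inj: "\<forall>i j. win s n i = win s n j \<longrightarrow> i mod m = j mod m"
    and sos: "\<forall>i j. win s n i \<noteq> rev (win s n j) \<and> win s n i \<noteq> negq q (rev (win s n j))"
    using assms(3) unfolding SOS_def window_seq_def by blast+
  have rng: "\<forall>i. 0 \<le> s i \<and> s i < q" and m: "0 < m" and p: "\<forall>i. s (i + m) = s i"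
    using per by (auto simp: periodic_seq_def)
  have nn: "\<And>j. negq q (negq q (win s n j)) = win s n j"
    by (rule negq_negq[OF win_range[OF rng]])
  have nnr: "\<And>j. negq q (negq q (rev (win s n j))) = rev (win s n j)"
    by (rule negq_negq) (simp add: win_range[OF rng])
  have "periodic_seq q m (\<lambda>i. (- s i) mod q)"
    using m p assms(1) by (simp add: periodic_seq_def)
  moreover have "\<forall>i j. win (\<lambda>i. (- s i) mod q) n i = win (\<lambda>i. (- s i) mod q) n j \<longrightarrow> i mod m = j mod m"
  proof (intro allI impI)
    fix i j assume "win (\<lambda>i. (- s i) mod q) n i = win (\<lambda>i. (- s i) mod q) n j"
    then have "negq q (negq q (win s n i)) = negq q (negq q (win s n j))" by (simp add: win_neg)
    then have "win s n i = win s n j" by (simp only: nn)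
    then show "i mod m = j mod m" using inj by blast
  qed
  moreover have "s_disjoint q n s (\<lambda>i. (- s i) mod q)"
    unfolding s_disjoint_def win_neg
  proof (intro allI conjI)
    fix i j
    show "win s n i \<noteq> negq q (win s n j)"
    proof
      assume "win s n i = negq q (win s n j)"
      then have "negq q (win s n i) = win s n j" using nn by simp
      then show False using assms(4)[rule_format, of "win s n i"] by metis
    qed
    show "win s n i \<noteq> rev (negq q (win s n j))"
      unfolding rev_negq using sos by blast
    show "win s n i \<noteq> negq q (rev (negq q (win s n j)))"
      unfolding rev_negq nnr using sos by blast
  qed
  ultimately show ?thesis unfolding window_seq_def by (intro conjI)
qed

end
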